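(* For each $d\ge1$ let $B$ be a random $d\times d$ matrix with independent entries $B_{mn}\in\{0,1\}$, $\mathbb P(B_{mn}=1)=1/d$, and let $\{\theta_{mn}\}_{m,n}$ be i.i.d. random angles on the circle, independent of $B$. Define $B_\theta$ by $(B_\theta)_{mn}=B_{mn}e^{\mathrm i\theta_{mn}}$. Then for every positive integer $k$, the $k$-th moments of the averaged singular value (squared) distributions of the two ensembles coincide in the large-dimension limit: $$\lim_{d\to\infty}\frac1d\,\mathbb E_{B,\theta}\operatorname{tr}\big[(B_\theta^\dagger B_\theta)^k\big]=\lim_{d\to\infty}\frac1d\,\mathbb E_{B}\operatorname{tr}\big[(B^tB)^k\big].$$ *)

theory Defs
  imports "HOL-Probability.Probability" "Jordan_Normal_Form.Schur_Decomposition"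
begin

abbreviation entries :: "nat \<Rightarrow> (nat \<times> nat) set" where
  "entries d \<equiv> {0..<d} \<times> {0..<d}"

definition bern_ens :: "nat \<Rightarrow> (nat \<times> nat \<Rightarrow> bool) measure" where
  "bern_ens d = (\<Pi>\<^sub>M e\<in>entries d. measure_pmf (bernoulli_pmf (1 / real d)))"

definition phase_ens :: "real measure \<Rightarrow> nat \<Rightarrow> (nat \<times> nat \<Rightarrow> real) measure" where
  "phase_ens \<mu> d = (\<Pi>\<^sub>M e\<in>entries d. \<mu>)"

definition B_mat :: "nat \<Rightarrow> (nat \<times> nat \<Rightarrow> bool) \<Rightarrow> real mat" where
  "B_mat d b = mat d d (\<lambda>(m, n). if b (m, n) then 1 else 0)"

definition B_theta :: "nat \<Rightarrow> (nat \<times> nat \<Rightarrow> bool) \<Rightarrow> (nat \<times> nat \<Rightarrow> real) \<Rightarrow> complex mat" where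
  "B_theta d b \<theta> = mat d d (\<lambda>(m, n). (if b (m, n) then 1 else 0) * exp (\<i> * complex_of_real (\<theta> (m, n))))"

definition mat_trace :: "'a::comm_monoid_add mat \<Rightarrow> 'a" where
  "mat_trace A = (\<Sum>i<dim_row A. A $$ (i, i))"

end

theory Submission
  imports Defs "HOL-Library.Multiset" "HOL-Library.FuncSet"
begin

definition steps :: "'v list \<Rightarrow> ('v \<times> 'v) list" where
  "steps xs = zip xs (tl xs)"

definition edges :: "'v list \<Rightarrow> 'v set set" where
  "edges xs = (\<lambda>(a,b). {a,b}) ` set (steps xs)"

lemma steps_Nil[simp]: "steps [] = []" and steps_single[simp]: "steps [x] = []"
  by (auto simp: steps_def)

lemma steps_Cons2[simp]: "steps (x # y # zs) = (x, y) # steps (y # zs)"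
  by (simp add: steps_def)

lemma steps_append_mid: "steps (P @ u # Q) = steps (P @ [u]) @ steps (u # Q)"
proof (induction P)
  case Nil then show ?case by simp
next
  case (Cons a P)
  then show ?case by (cases P) auto
qed

lemma finite_edges[simp]: "finite (edges xs)"
  by (simp add: edges_def)

lemma edges_Cons2[simp]: "edges (x # y # zs) = insert {x,y} (edges (y # zs))"
  by (simp add: edges_def)

lemma edges_single[simp]: "edges [x] = {}"
  by (simp add: edges_def)

lemma steps_in_set: "(a,b) \<in> set (steps xs) \<Longrightarrow> a \<in> set xs \<and> b \<in> set xs"
  by (induction xs rule: induct_list012) auto

lemma edges_sub: "e \<in> edges xs \<Longrightarrow> e \<subseteq> set xs"
  by (auto simp: edges_def dest: steps_in_set)

lemma card_set_le_edges: "xs \<noteq> [] \<Longrightarrow> card (set xs) \<le> card (edges xs) + 1"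
proof (induction xs rule: induct_list012)
  case (3 x y zs)
  have IH: "card (set (y # zs)) \<le> card (edges (y # zs)) + 1" using 3 by simp
  show ?case
  proof (cases "x \<in> set (y # zs)")
    case True
    then have "set (x # y # zs) = set (y # zs)" by auto
    moreover have "card (edges (y # zs)) \<le> card (edges (x # y # zs))"
      by (simp add: card_mono subset_insertI)
    ultimately show ?thesis using IH by simp
  next
    case False
    have "{x,y} \<notin> edges (y # zs)" using False edges_sub by blast
    then have "card (edges (x # y # zs)) = card (edges (y # zs)) + 1" by simp
    moreover have "card (set (x # y # zs)) = card (set (y # zs)) + 1"
      using False by (simp add: card_insert_if del: set_simps(2)) (simp add: insert_absorb)
    ultimately show ?thesis using IH by simp
  qed
qed auto

lemma set_sub_steps: "length xs \<ge> 2 \<Longrightarrow> y \<in> set xs \<Longrightarrow> \<exists>e \<in> edges xs. y \<in> e"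
proof (induction xs rule: induct_list012)
  case (3 x y' zs)
  show ?case
  proof (cases "y \<in> {x, y'}")
    case True then show ?thesis by auto
  next
    case False
    then have "y \<in> set zs" "zs \<noteq> []" using 3 by auto
    then have "length (y' # zs) \<ge> 2" by (cases zs) auto
    with 3 \<open>y \<in> set zs\<close> obtain e where "e \<in> edges (y' # zs)" "y \<in> e" by auto
    then show ?thesis by auto
  qed
qed auto

lemma edge_card2: "(\<forall>p\<in>set (steps xs). fst p \<noteq> snd p) \<Longrightarrow> e \<in> edges xs \<Longrightarrow> card e = 2"
  by (auto simp: edges_def)

lemma handshake:
  assumes "\<forall>p\<in>set (steps xs). fst p \<noteq> snd p"
  shows "(\<Sum>y\<in>set xs. card {e \<in> edges xs. y \<in> e}) = 2 * card (edges xs)"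
proof -
  have "(\<Sum>y\<in>set xs. card {e \<in> edges xs. y \<in> e}) = (\<Sum>y\<in>set xs. \<Sum>e\<in>edges xs. if y \<in> e then 1 else 0)"
    by (rule sum.cong[OF refl]) (simp add: sum.If_cases Int_def)
  also have "\<dots> = (\<Sum>e\<in>edges xs. \<Sum>y\<in>set xs. if y \<in> e then 1 else 0)"
    by (rule sum.swap)
  also have "\<dots> = (\<Sum>e\<in>edges xs. card e)"
  proof (rule sum.cong[OF refl])
    fix e assume "e \<in> edges xs"
    then have "e \<subseteq> set xs" by (rule edges_sub)
    then have "set xs \<inter> {y. y \<in> e} = e" by auto
    then show "(\<Sum>y\<in>set xs. if y \<in> e then 1 else 0) = card e"
      by (simp add: sum.If_cases)
  qed
  also have "\<dots> = (\<Sum>e\<in>edges xs. 2)"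
    using edge_card2[OF assms] by simp
  finally show ?thesis by simp
qed

lemma count_pair_sym: "count {#(z,y), (y,z)#} (a,b) = count {#(z,y), (y,z)#} (b,a)"
proof -
  have c2: "count {#(z,y), (y,z)#} p = (if p = (z,y) then 1 else 0) + (if p = (y,z) then 1 else 0)" for p
    by (simp only: count_add_mset count_empty) simp
  have e1: "((a,b) = (z,y)) = ((b,a) = (y,z))" and e2: "((a,b) = (y,z)) = ((b,a) = (z,y))" by auto
  show ?thesis unfolding c2 e1 e2 by (rule add.commute)
qed

lemma tree_balanced:
  assumes "xs \<noteq> []" "hd xs = last xs" "\<forall>p\<in>set (steps xs). fst p \<noteq> snd p"
    "card (set xs) = card (edges xs) + 1"
  shows "count (mset (steps xs)) (a,b) = count (mset (steps xs)) (b,a)"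
  using assms
proof (induction xs rule: length_induct)
  case (1 xs)
  note nl = "1.prems"(3)
  show ?case
  proof (cases "length xs \<ge> 2")
    case False
    then have "steps xs = []" using "1.prems"(1) by (cases xs) (auto simp: steps_def Suc_le_eq)
    then show ?thesis by simp
  next
    case True
    define V where "V = set xs"
    define E where "E = edges xs"
    define deg where "deg y = card {e \<in> E. y \<in> e}" for y
    have finV: "finite V" by (simp add: V_def)
    have deg1: "deg y \<ge> 1" if yV: "y \<in> V" for y
    proof -
      obtain e where "e \<in> E" "y \<in> e" using set_sub_steps[OF True] yV by (auto simp: V_def E_def)
      then have "{e \<in> E. y \<in> e} \<noteq> {}" by auto
      then show ?thesis unfolding deg_def E_def by (simp add: Suc_le_eq card_gt_0_iff)
    qed
    have hs: "(\<Sum>y\<in>V. deg y) = 2 * card E"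
      using handshake[OF nl] by (simp add: V_def E_def deg_def)
    have v0: "hd xs \<in> V" using "1.prems"(1) by (simp add: V_def)
    obtain y where y: "y \<in> V" "y \<noteq> hd xs" "deg y \<le> 1"
    proof (rule ccontr)
      assume "\<not> thesis"
      then have ge2: "\<forall>y\<in>V - {hd xs}. deg y \<ge> 2" using that by force
      have s1: "(\<Sum>y\<in>V. deg y) = deg (hd xs) + (\<Sum>y\<in>V - {hd xs}. deg y)"
        using finV v0 by (simp add: sum.remove)
      have "(\<Sum>y\<in>V - {hd xs}. deg y) \<ge> (\<Sum>y\<in>V - {hd xs}. 2)"
        by (rule sum_mono) (use ge2 in auto)
      then have s2: "(\<Sum>y\<in>V - {hd xs}. deg y) \<ge> 2 * (card V - 1)"
        using finV v0 by (simp add: card_Diff_singleton)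
      have "(\<Sum>y\<in>V. deg y) \<ge> 1 + 2 * (card V - 1)"
        using s1 s2 deg1[OF v0] by linarith
      then show False using hs "1.prems"(4) by (simp add: V_def E_def)
    qed
    have "deg y = 1" using y deg1 by fastforce
    then obtain e where e: "{e' \<in> E. y \<in> e'} = {e}" unfolding deg_def by (auto simp: card_Suc_eq)
    have uniq: "\<And>e'. e' \<in> E \<Longrightarrow> y \<in> e' \<Longrightarrow> e' = e" using e by blast
    have ylast: "y \<noteq> last xs" using y "1.prems"(2) by simp
    obtain A C where xsAC: "xs = A @ y # C" using y(1) by (auto simp: V_def dest: split_list)
    have "A \<noteq> []" using xsAC y(2) by auto
    have "C \<noteq> []" using xsAC ylast by auto
    obtain A' z where A: "A = A' @ [z]" using \<open>A \<noteq> []\<close> by (metis rev_exhaust)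
    obtain c C' where C: "C = c # C'" using \<open>C \<noteq> []\<close> by (cases C) auto
    have st: "steps xs = steps (A' @ [z]) @ (z, y) # (y, c) # steps (c # C')"
      unfolding xsAC A C using steps_append_mid[of A' z "y # c # C'"] by simp
    have ay: "{z, y} \<in> E" "{y, c} \<in> E" unfolding E_def edges_def st by force+
    have "(z, y) \<in> set (steps xs)" "(y, c) \<in> set (steps xs)" unfolding st by auto
    then have "z \<noteq> y" "c \<noteq> y" using nl by auto
    have "{z, y} = {y, c}" using uniq[OF ay(1)] uniq[OF ay(2)] by auto
    then have "c = z" using \<open>z \<noteq> y\<close> \<open>c \<noteq> y\<close> by (auto simp: doubleton_eq_iff)
    define ys where "ys = A' @ z # C'"
    have stys: "steps ys = steps (A' @ [z]) @ steps (z # C')"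
      unfolding ys_def by (rule steps_append_mid)
    have mst: "mset (steps xs) = mset (steps ys) + {#(z,y), (y,z)#}"
      unfolding st stys \<open>c = z\<close> by simp
    have Eys: "edges ys \<subseteq> E" and Exs: "E = insert {z,y} (edges ys)"
      unfolding E_def edges_def st stys \<open>c = z\<close> by auto
    have Vxs: "V = insert y (set ys)" and Vys: "set ys \<subseteq> V"
      unfolding V_def xsAC A C ys_def \<open>c = z\<close> by auto
    have ysne: "ys \<noteq> []" by (simp add: ys_def)
    have hdys: "hd ys = last ys"
    proof -
      have "hd ys = hd xs" unfolding ys_def xsAC A C \<open>c = z\<close> by (cases A') auto
      moreover have "last ys = last xs" unfolding ys_def xsAC A C \<open>c = z\<close> by (cases C') auto
      ultimately show ?thesis using "1.prems"(2) by simp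
    qed
    have nlys: "\<forall>p\<in>set (steps ys). fst p \<noteq> snd p" using nl mst
      by (metis (no_types, lifting) set_mset_mset set_mset_union UnI1 case_prodD case_prodI2)
    have lt: "length ys < length xs" unfolding ys_def xsAC A C by simp
    have le1: "card (set ys) \<le> card (edges ys) + 1" using card_set_le_edges[OF ysne] .
    have le2: "card (edges ys) + 1 \<le> card (set ys)"
    proof (cases "y \<in> set ys")
      case True
      then have "set ys = V" using Vxs by auto
      moreover have "card (edges ys) \<le> card E" using Eys by (simp add: card_mono E_def)
      ultimately show ?thesis using "1.prems"(4) by (simp add: V_def E_def)
    next
      case False
      then have "card (set ys) + 1 = card V" using Vxs by simp
      have "{z,y} \<notin> edges ys" using False edges_sub by blast
      then have "card E = card (edges ys) + 1" using Exs by simp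
      then show ?thesis using "1.prems"(4) \<open>card (set ys) + 1 = card V\<close> by (simp add: V_def E_def)
    qed
    have "count (mset (steps ys)) (a, b) = count (mset (steps ys)) (b, a)"
    proof -
      have tr: "card (set ys) = card (edges ys) + 1" using le1 le2 by simp
      show ?thesis using spec[OF "1.IH", of ys] lt ysne hdys nlys tr by argo
    qed
    note ih = this
    have cnt: "count (mset (steps xs)) p = count (mset (steps ys)) p + count {#(z,y), (y,z)#} p" for p
      using mst by simp
    show ?thesis using ih cnt[of "(a,b)"] cnt[of "(b,a)"] count_pair_sym[of z y a b] by linarith
  qed
qed


definition fo :: "nat list \<Rightarrow> nat \<Rightarrow> nat" where
  "fo x v = (LEAST i. i < length x \<and> x ! i = v)"

definition canon :: "nat list \<Rightarrow> nat list" where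
  "canon x = map (fo x) x"

lemma fo_prop: "v \<in> set x \<Longrightarrow> fo x v < length x \<and> x ! fo x v = v"
  unfolding fo_def by (rule LeastI_ex) (auto simp: in_set_conv_nth)

lemma fo_inj: "inj_on (fo x) (set x)"
  by (metis fo_prop inj_onI)

lemma length_canon[simp]: "length (canon x) = length x"
  by (simp add: canon_def)

lemma set_canon: "set (canon x) \<subseteq> {..<length x}"
  using fo_prop by (auto simp: canon_def)

lemma fo_map: assumes "inj_on h (set x)" "v \<in> set x" shows "fo (map h x) (h v) = fo x v"
proof -
  have "(i < length x \<and> map h x ! i = h v) = (i < length x \<and> x ! i = v)" for i
    using assms by (auto simp: inj_on_eq_iff)
  then show ?thesis by (simp add: fo_def)
qed

lemma canon_map: "inj_on h (set x) \<Longrightarrow> canon (map h x) = canon x"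
  by (auto simp: canon_def fo_map)

lemma canon_canon: "canon (canon x) = canon x"
  by (metis canon_def canon_map fo_inj)

lemma canon_fix: assumes "i \<in> set (canon y)" shows "canon y ! i = i"
proof -
  obtain j where j: "j < length y" "i = fo y (y ! j)" using assms by (auto simp: canon_def in_set_conv_nth)
  have "y ! j \<in> set y" using j by simp
  then have "fo y (y ! j) < length y" "y ! fo y (y ! j) = y ! j" using fo_prop by blast+
  then show ?thesis using j by (simp add: canon_def)
qed

lemma map_nth_canon: "map (\<lambda>i. x ! i) (canon x) = x"
  by (rule nth_equalityI) (auto simp: canon_def fo_prop)

definition Xs :: "nat \<Rightarrow> nat \<Rightarrow> nat list set" where
  "Xs d n = {x. set x \<subseteq> {..<d} \<and> length x = n}"

lemma finite_Xs[simp]: "finite (Xs d n)"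
  unfolding Xs_def using finite_lists_length_eq[of "{..<d}" n] by simp

lemma canon_in_Xs: "x \<in> Xs d n \<Longrightarrow> canon x \<in> Xs n n"
  using set_canon[of x] by (auto simp: Xs_def)

definition shapes :: "nat \<Rightarrow> nat list set" where
  "shapes n = canon ` Xs n n"

lemma finite_shapes[simp]: "finite (shapes n)"
  by (simp add: shapes_def)

lemma canon_in_shapes: "x \<in> Xs d n \<Longrightarrow> canon x \<in> shapes n"
  unfolding shapes_def using canon_in_Xs canon_canon by (metis image_eqI)

lemma shape_canon: "s \<in> shapes n \<Longrightarrow> canon s = s"
  unfolding shapes_def using canon_canon by auto

definition Ncount :: "nat \<Rightarrow> nat \<Rightarrow> nat list \<Rightarrow> nat" where
  "Ncount d n s = card {x \<in> Xs d n. canon x = s}"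

lemma Ncount_eq:
  assumes s: "s \<in> shapes n"
  shows "Ncount d n s = (\<Prod>i<card (set s). d - i)"
proof -
  define Q where "Q = set s"
  define F where "F = {x \<in> Xs d n. canon x = s}"
  define I where "I = {\<alpha> \<in> Q \<rightarrow>\<^sub>E {..<d}. inj_on \<alpha> Q}"
  obtain y where y: "s = canon y" "y \<in> Xs n n" using s by (auto simp: shapes_def)
  have ls: "length s = n" using y by (simp add: Xs_def)
  have fx: "s ! i = i" if "i \<in> Q" for i using canon_fix that y(1) Q_def by blast
  have cs: "canon s = s" using y canon_canon by simp
  have "bij_betw (\<lambda>x. restrict (\<lambda>i. x ! i) Q) F I"
  proof (rule bij_betw_byWitness[where f' = "\<lambda>\<alpha>. map \<alpha> s"])
    show "\<forall>x\<in>F. map (restrict (\<lambda>i. x ! i) Q) s = x"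
    proof
      fix x assume "x \<in> F"
      then have "canon x = s" by (simp add: F_def)
      then have "map (\<lambda>i. x ! i) s = x" using map_nth_canon by metis
      then show "map (restrict (\<lambda>i. x ! i) Q) s = x"
        by (metis (no_types, lifting) Q_def map_eq_conv restrict_apply')
    qed
    show "\<forall>\<alpha>\<in>I. restrict (\<lambda>i. map \<alpha> s ! i) Q = \<alpha>"
    proof
      fix \<alpha> assume a: "\<alpha> \<in> I"
      show "restrict (\<lambda>i. map \<alpha> s ! i) Q = \<alpha>"
      proof (rule ext)
        fix i show "restrict (\<lambda>i. map \<alpha> s ! i) Q i = \<alpha> i"
        proof (cases "i \<in> Q")
          case True
          have "i < length s" using True y set_canon[of y] ls Q_def by (auto simp: Xs_def)
          then show ?thesis using True fx by simp
        next
          case False then show ?thesis using a by (auto simp: I_def PiE_def extensional_def)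
        qed
      qed
    qed
    show "(\<lambda>x. restrict (\<lambda>i. x ! i) Q) ` F \<subseteq> I"
    proof
      fix \<alpha> assume "\<alpha> \<in> (\<lambda>x. restrict (\<lambda>i. x ! i) Q) ` F"
      then obtain x where x: "x \<in> F" "\<alpha> = restrict (\<lambda>i. x ! i) Q" by auto
      have cx: "canon x = s" and xX: "x \<in> Xs d n" using x by (auto simp: F_def)
      have lx: "length x = n" using xX by (simp add: Xs_def)
      have Qlt: "i \<in> Q \<Longrightarrow> i < n" for i using set_canon[of x] cx lx Q_def by auto
      have "x ! i < d" if "i \<in> Q" for i using xX Qlt[OF that] by (auto simp: Xs_def dest!: nth_mem)
      moreover have "inj_on (\<lambda>i. x ! i) Q"
      proof (rule inj_onI)
        fix i j assume ij: "i \<in> Q" "j \<in> Q" "x ! i = x ! j"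
        have "fo x (x ! i) = fo x (x ! j)" using ij by simp
        moreover have "fo x (x ! i) = i"
          using ij(1) Qlt[OF ij(1)] fx[OF ij(1)] cx lx unfolding canon_def by (metis nth_map)
        moreover have "fo x (x ! j) = j"
          using ij(2) Qlt[OF ij(2)] fx[OF ij(2)] cx lx unfolding canon_def by (metis nth_map)
        ultimately show "i = j" by simp
      qed
      ultimately show "\<alpha> \<in> I" unfolding I_def x(2) by (auto simp: inj_on_def)
    qed
    show "(\<lambda>\<alpha>. map \<alpha> s) ` I \<subseteq> F"
    proof
      fix x assume "x \<in> (\<lambda>\<alpha>. map \<alpha> s) ` I"
      then obtain \<alpha> where a: "\<alpha> \<in> I" "x = map \<alpha> s" by auto
      have "canon x = s" using a canon_map[of \<alpha> s] cs by (simp add: I_def Q_def)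
      moreover have "x \<in> Xs d n" using a ls by (auto simp: Xs_def I_def Q_def)
      ultimately show "x \<in> F" by (simp add: F_def)
    qed
  qed
  then have "card F = card I" by (rule bij_betw_same_card)
  also have "card I = (\<Prod>i<card Q. d - i)"
    unfolding I_def using card_inj_on_subset_funcset[of Q "{..<d}" Q]
    by (simp add: Q_def atLeast0LessThan)
  finally show ?thesis by (simp add: Ncount_def F_def Q_def)
qed

lemma shape_sum:
  fixes G :: "nat list \<Rightarrow> 'a::comm_semiring_1"
  assumes inv: "\<And>x h. inj_on h (set x) \<Longrightarrow> G (map h x) = G x"
  shows "(\<Sum>x\<in>Xs d n. G x) = (\<Sum>s\<in>shapes n. of_nat (Ncount d n s) * G s)"
proof -
  have "(\<Sum>x\<in>Xs d n. G x) = (\<Sum>s\<in>shapes n. \<Sum>x\<in>{x \<in> Xs d n. canon x = s}. G x)"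
    by (rule sum.group[symmetric]) (auto intro: canon_in_shapes)
  also have "\<dots> = (\<Sum>s\<in>shapes n. of_nat (Ncount d n s) * G s)"
  proof (rule sum.cong[OF refl])
    fix s assume "s \<in> shapes n"
    have "G x = G s" if "x \<in> {x \<in> Xs d n. canon x = s}" for x
      using that inv[OF fo_inj[of x]] by (auto simp: canon_def)
    then show "(\<Sum>x\<in>{x \<in> Xs d n. canon x = s}. G x) = of_nat (Ncount d n s) * G s"
      by (simp add: Ncount_def)
  qed
  finally show ?thesis .
qed


definition ent :: "nat list \<Rightarrow> nat \<Rightarrow> nat \<times> nat" where
  "ent x j = (if even j then (x ! (Suc j mod length x), x ! j) else (x ! j, x ! (Suc j mod length x)))"

definition sg :: "nat \<Rightarrow> int" where
  "sg j = (if even j then -1 else 1)"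

definition Ew :: "nat list \<Rightarrow> (nat \<times> nat) set" where
  "Ew x = ent x ` {..<length x}"

definition flow :: "nat list \<Rightarrow> nat \<times> nat \<Rightarrow> int" where
  "flow x e = (\<Sum>j\<in>{j. j < length x \<and> ent x j = e}. sg j)"

definition vtx :: "nat list \<Rightarrow> nat \<Rightarrow> nat \<times> nat" where
  "vtx x j = (j mod 2, x ! (j mod length x))"

definition vl :: "nat list \<Rightarrow> (nat \<times> nat) list" where
  "vl x = map (vtx x) [0..<Suc (length x)]"

lemma finite_Ew[simp]: "finite (Ew x)" by (simp add: Ew_def)

lemma steps_vl: "steps (vl x) = map (\<lambda>j. (vtx x j, vtx x (Suc j))) [0..<length x]"
  by (rule nth_equalityI) (auto simp: steps_def vl_def nth_tl simp del: upt_Suc)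

definition phi :: "nat \<times> nat \<Rightarrow> (nat \<times> nat) set" where
  "phi e = {(1, fst e), (0, snd e)}"

lemma inj_phi: "inj phi"
  by (auto simp: phi_def inj_def doubleton_eq_iff)

lemma step_edge:
  assumes "even (length x)" "j < length x"
  shows "{vtx x j, vtx x (Suc j)} = phi (ent x j)"
proof -
  have m: "j mod length x = j" using assms by simp
  show ?thesis using assms m by (auto simp: vtx_def phi_def ent_def mod2_eq_if)
qed

lemma edges_vl: assumes "even (length x)" shows "edges (vl x) = phi ` Ew x"
proof -
  have "edges (vl x) = (\<lambda>j. {vtx x j, vtx x (Suc j)}) ` {..<length x}"
    unfolding edges_def steps_vl by (auto simp: image_image atLeast0LessThan)
  also have "\<dots> = (\<lambda>j. phi (ent x j)) ` {..<length x}"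
    using step_edge[OF assms] by (intro image_cong) auto
  also have "\<dots> = phi ` Ew x" by (simp add: Ew_def image_image)
  finally show ?thesis .
qed

lemma card_edges_vl: "even (length x) \<Longrightarrow> card (edges (vl x)) = card (Ew x)"
  by (simp add: edges_vl card_image inj_on_subset[OF inj_phi])

lemma card_set_vl: assumes "x \<noteq> []" shows "card (set x) \<le> card (set (vl x))"
proof -
  have "set x \<subseteq> snd ` set (vl x)"
  proof
    fix v assume "v \<in> set x"
    then obtain i where i: "i < length x" "x ! i = v" by (auto simp: in_set_conv_nth)
    then have "vtx x i \<in> set (vl x)" by (auto simp: vl_def)
    then show "v \<in> snd ` set (vl x)" using i by (force simp: vtx_def)
  qed
  then have "card (set x) \<le> card (snd ` set (vl x))" by (simp add: card_mono)
  also have "\<dots> \<le> card (set (vl x))" by (rule card_image_le) simp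
  finally show ?thesis .
qed

lemma walk_conn: assumes "x \<noteq> []" "even (length x)" shows "card (set x) \<le> card (Ew x) + 1"
proof -
  have "vl x \<noteq> []" by (simp add: vl_def)
  then have "card (set (vl x)) \<le> card (edges (vl x)) + 1" by (rule card_set_le_edges)
  then show ?thesis using card_set_vl[OF assms(1)] card_edges_vl[OF assms(2)] by simp
qed

lemma count_map_upt: "count (mset (map f [0..<n])) p = card {j. j < n \<and> f j = p}"
proof (induction n)
  case 0 show ?case by simp
next
  case (Suc n)
  show ?case
  proof (cases "f n = p")
    case True
    then have "{j. j < Suc n \<and> f j = p} = insert n {j. j < n \<and> f j = p}" by (auto simp: less_Suc_eq)
    then show ?thesis using Suc True by simp
  next
    case False
    then have "{j. j < Suc n \<and> f j = p} = {j. j < n \<and> f j = p}" by (auto simp: less_Suc_eq)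
    then show ?thesis using Suc False by simp
  qed
qed

lemma walk_tree:
  assumes "x \<noteq> []" "even (length x)" "card (Ew x) + 1 \<le> card (set x)"
  shows "flow x e = 0"
proof -
  obtain r c where e: "e = (r, c)" by (cases e)
  let ?n = "length x"
  have ne: "vl x \<noteq> []" by (simp add: vl_def)
  have hl: "hd (vl x) = last (vl x)" using assms(2)
    by (simp add: vl_def vtx_def hd_map last_map del: upt_Suc)
  have nl: "\<forall>p\<in>set (steps (vl x)). fst p \<noteq> snd p"
    unfolding steps_vl by (auto simp: vtx_def mod2_eq_if)
  have cV: "card (set (vl x)) = card (edges (vl x)) + 1"
    using card_set_le_edges[OF ne] card_set_vl[OF assms(1)] card_edges_vl[OF assms(2)] assms(3) by simp
  have bal: "count (mset (steps (vl x))) ((1,r),(0,c)) = count (mset (steps (vl x))) ((0,c),(1,r))"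
    by (rule tree_balanced[OF ne hl nl cV])
  have s1: "((vtx x j, vtx x (Suc j)) = ((1,r),(0,c))) = (odd j \<and> ent x j = (r,c))" if "j < ?n" for j
    using that assms(2) by (auto simp: vtx_def ent_def mod2_eq_if)
  have s2: "((vtx x j, vtx x (Suc j)) = ((0,c),(1,r))) = (even j \<and> ent x j = (r,c))" if "j < ?n" for j
    using that assms(2) by (auto simp: vtx_def ent_def mod2_eq_if)
  have c1: "card {j. j < ?n \<and> odd j \<and> ent x j = (r,c)} = card {j. j < ?n \<and> even j \<and> ent x j = (r,c)}"
  proof -
    have q1: "{j. j < ?n \<and> (vtx x j, vtx x (Suc j)) = ((1,r),(0,c))} = {j. j < ?n \<and> odd j \<and> ent x j = (r,c)}"
      using s1 by blast
    have q2: "{j. j < ?n \<and> (vtx x j, vtx x (Suc j)) = ((0,c),(1,r))} = {j. j < ?n \<and> even j \<and> ent x j = (r,c)}"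
      using s2 by blast
    note bal' = bal[unfolded steps_vl count_map_upt]
    show ?thesis using bal' unfolding q1 q2 .
  qed
  define S where "S = {j. j < ?n \<and> ent x j = (r,c)}"
  have fS: "finite S" by (simp add: S_def)
  have "flow x e = (\<Sum>j\<in>S. sg j)" by (simp add: flow_def S_def e)
  also have "\<dots> = (\<Sum>j\<in>S \<inter> {j. even j}. -1) + (\<Sum>j\<in>S \<inter> - {j. even j}. 1)"
    unfolding sg_def by (rule sum.If_cases[OF fS])
  also have "\<dots> = - int (card {j. j < ?n \<and> even j \<and> ent x j = (r,c)}) + int (card {j. j < ?n \<and> odd j \<and> ent x j = (r,c)})"
  proof -
    have "S \<inter> {j. even j} = {j. j < ?n \<and> even j \<and> ent x j = (r,c)}" "S \<inter> - {j. even j} = {j. j < ?n \<and> odd j \<and> ent x j = (r,c)}"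
      by (auto simp: S_def)
    then show ?thesis by simp
  qed
  also have "\<dots> = 0" using c1 by simp
  finally show ?thesis .
qed

lemma Suc_mod_lt: "j < length x \<Longrightarrow> Suc j mod length x < length x"
  by (rule mod_less_divisor) (cases x, auto)

lemma ent_map: "j < length x \<Longrightarrow> ent (map h x) j = map_prod h h (ent x j)"
  using Suc_mod_lt[of j x] by (simp add: ent_def)

lemma ent_in_set: "j < length x \<Longrightarrow> fst (ent x j) \<in> set x \<and> snd (ent x j) \<in> set x"
  using Suc_mod_lt[of j x] by (auto simp: ent_def)

lemma Ew_sub: "e \<in> Ew x \<Longrightarrow> fst e \<in> set x \<and> snd e \<in> set x"
  using ent_in_set by (auto simp: Ew_def)

lemma Ew_map: "Ew (map h x) = map_prod h h ` Ew x"
  by (auto simp: Ew_def ent_map image_image)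

lemma inj_map_prod_Ew: "inj_on h (set x) \<Longrightarrow> inj_on (map_prod h h) (Ew x)"
  using Ew_sub unfolding inj_on_def by (metis map_prod_simp prod.collapse prod.inject)

lemma card_Ew_map: "inj_on h (set x) \<Longrightarrow> card (Ew (map h x)) = card (Ew x)"
  by (simp add: Ew_map card_image inj_map_prod_Ew)

lemma flow_map:
  assumes "inj_on h (set x)" "e \<in> Ew x"
  shows "flow (map h x) (map_prod h h e) = flow x e"
proof -
  have "{j. j < length x \<and> ent (map h x) j = map_prod h h e} = {j. j < length x \<and> ent x j = e}"
  proof -
    have "ent (map h x) j = map_prod h h e \<longleftrightarrow> ent x j = e" if "j < length x" for j
      using inj_map_prod_Ew[OF assms(1)] assms(2) that
      by (simp add: ent_map inj_on_eq_iff Ew_def)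
    then show ?thesis by blast
  qed
  then show ?thesis by (simp add: flow_def)
qed

definition PhiF :: "(int \<Rightarrow> 'a::comm_monoid_mult) \<Rightarrow> nat list \<Rightarrow> 'a" where
  "PhiF F x = (\<Prod>e\<in>Ew x. F (flow x e))"

lemma PhiF_map: assumes "inj_on h (set x)" shows "PhiF F (map h x) = PhiF F x"
proof -
  have "PhiF F (map h x) = (\<Prod>e\<in>map_prod h h ` Ew x. F (flow (map h x) e))"
    by (simp add: PhiF_def Ew_map)
  also have "\<dots> = (\<Prod>e\<in>Ew x. F (flow (map h x) (map_prod h h e)))"
    by (rule prod.reindex[OF inj_map_prod_Ew[OF assms], unfolded comp_def])
  also have "\<dots> = PhiF F x"
    unfolding PhiF_def by (rule prod.cong) (auto simp: flow_map[OF assms])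
  finally show ?thesis .
qed

lemma PhiF_tree:
  assumes "x \<noteq> []" "even (length x)" "card (Ew x) + 1 \<le> card (set x)"
  shows "PhiF F x = F 0 ^ card (Ew x)"
  unfolding PhiF_def using walk_tree[OF assms] by simp


lemma ffact_ratio_lim:
  fixes q m :: nat
  shows "(\<lambda>d. real (\<Prod>i<q. d - i) / real d ^ (q + m)) \<longlonglongrightarrow> (if m = 0 then 1 else 0)"
proof -
  have ev: "eventually (\<lambda>d. real (\<Prod>i<q. d - i) / real d ^ (q + m) =
      (\<Prod>i<q. 1 - real i * inverse (real d)) * inverse (real d) ^ m) sequentially"
    using eventually_ge_at_top[of "Suc q"]
  proof eventually_elim
    case (elim d)
    then have dpos: "real d > 0" by simp
    have "real (\<Prod>i<q. d - i) = (\<Prod>i<q. real d - real i)"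
      using elim by (simp add: of_nat_prod of_nat_diff)
    also have "\<dots> = (\<Prod>i<q. real d * (1 - real i * inverse (real d)))"
      using dpos by (intro prod.cong refl) (simp add: field_simps)
    also have "\<dots> = real d ^ q * (\<Prod>i<q. 1 - real i * inverse (real d))"
      by (simp add: prod.distrib)
    finally have "real (\<Prod>i<q. d - i) = real d ^ q * (\<Prod>i<q. 1 - real i * inverse (real d))" .
    then show ?case using dpos by (simp add: power_add field_simps power_inverse)
  qed
  have l1: "(\<lambda>d. \<Prod>i<q. 1 - real i * inverse (real d)) \<longlonglongrightarrow> (\<Prod>i<q. 1 - real i * 0)"
    by (intro tendsto_prod tendsto_intros lim_inverse_n)
  have l2: "(\<lambda>d. inverse (real d) ^ m) \<longlonglongrightarrow> 0 ^ m"
    by (intro tendsto_intros lim_inverse_n)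
  have "(\<lambda>d. (\<Prod>i<q. 1 - real i * inverse (real d)) * inverse (real d) ^ m) \<longlonglongrightarrow> 1 * 0 ^ m"
    using tendsto_mult[OF l1 l2] by simp
  then have "(\<lambda>d. real (\<Prod>i<q. d - i) / real d ^ (q + m)) \<longlonglongrightarrow> 1 * 0 ^ m"
    using tendsto_cong[OF ev] by simp
  moreover have eq: "(1::real) * 0 ^ m = (if m = 0 then 1 else 0)" by simp
  ultimately show ?thesis by (simp only: eq)
qed

lemma shape_props:
  assumes "s \<in> shapes n" "n > 0" "even n"
  shows "s \<noteq> []" "even (length s)" "card (set s) \<le> card (Ew s) + 1"
proof -
  have "length s = n" using assms(1) canon_in_Xs by (auto simp: shapes_def Xs_def)
  then show "s \<noteq> []" "even (length s)" using assms by auto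
  then show "card (set s) \<le> card (Ew s) + 1" by (rule walk_conn)
qed

definition lim_s :: "nat list \<Rightarrow> real" where
  "lim_s s = (if card (Ew s) + 1 = card (set s) then 1 else 0)"

lemma term_lim:
  assumes "s \<in> shapes n" "n > 0" "even n"
  shows "(\<lambda>d. real (Ncount d n s) * (1 / real d) ^ card (Ew s) / real d) \<longlonglongrightarrow> lim_s s"
proof -
  define q where "q = card (set s)"
  define m where "m = card (Ew s) + 1 - q"
  have qm: "q + m = Suc (card (Ew s))" using shape_props[OF assms] by (simp add: q_def m_def)
  have eq: "real (Ncount d n s) * (1 / real d) ^ card (Ew s) / real d = real (\<Prod>i<q. d - i) / real d ^ (q + m)" for d
  proof -
    have pw: "real d ^ (q + m) = real d * real d ^ card (Ew s)" by (simp only: qm power_Suc)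
    show ?thesis
    proof (cases "d = 0")
      case True then show ?thesis using qm by (simp add: pw)
    next
      case False then show ?thesis unfolding pw
        by (simp add: Ncount_eq[OF assms(1)] q_def[symmetric] power_one_over field_simps)
    qed
  qed
  have "lim_s s = (if m = 0 then 1 else 0)"
    using shape_props[OF assms] by (auto simp: lim_s_def m_def q_def)
  then show ?thesis unfolding eq using ffact_ratio_lim[of q m] by simp
qed

lemma comb_limit:
  fixes \<phi> :: "int \<Rightarrow> complex" and n :: nat
  assumes "n > 0" "even n" "\<phi> 0 = 1"
  shows "((\<lambda>d. (\<Sum>x\<in>Xs d n. complex_of_real ((1 / real d) ^ card (Ew x)) * PhiF \<phi> x) / of_nat d)
            \<longlonglongrightarrow> complex_of_real (\<Sum>s\<in>shapes n. lim_s s))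
       \<and> ((\<lambda>d. (\<Sum>x\<in>Xs d n. (1 / real d) ^ card (Ew x)) / real d) \<longlonglongrightarrow> (\<Sum>s\<in>shapes n. lim_s s))"
proof
  have R: "(\<Sum>x\<in>Xs d n. (1 / real d) ^ card (Ew x)) / real d =
      (\<Sum>s\<in>shapes n. real (Ncount d n s) * (1 / real d) ^ card (Ew s) / real d)" for d
  proof -
    have "(\<Sum>x\<in>Xs d n. (1 / real d) ^ card (Ew x)) = (\<Sum>s\<in>shapes n. of_nat (Ncount d n s) * (1 / real d) ^ card (Ew s))"
      by (rule shape_sum) (simp add: card_Ew_map)
    then show ?thesis by (simp add: sum_divide_distrib)
  qed
  show "(\<lambda>d. (\<Sum>x\<in>Xs d n. (1 / real d) ^ card (Ew x)) / real d) \<longlonglongrightarrow> (\<Sum>s\<in>shapes n. lim_s s)"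
    unfolding R by (intro tendsto_sum term_lim assms)
  have P: "(\<Sum>x\<in>Xs d n. complex_of_real ((1 / real d) ^ card (Ew x)) * PhiF \<phi> x) / of_nat d =
      (\<Sum>s\<in>shapes n. complex_of_real (real (Ncount d n s) * (1 / real d) ^ card (Ew s) / real d) * PhiF \<phi> s)" for d
  proof -
    have "(\<Sum>x\<in>Xs d n. complex_of_real ((1 / real d) ^ card (Ew x)) * PhiF \<phi> x) =
       (\<Sum>s\<in>shapes n. of_nat (Ncount d n s) * (complex_of_real ((1 / real d) ^ card (Ew s)) * PhiF \<phi> s))"
      by (rule shape_sum) (simp add: card_Ew_map PhiF_map)
    then show ?thesis by (simp add: sum_divide_distrib mult.assoc)
  qed
  have lim_phi: "complex_of_real (lim_s s) * PhiF \<phi> s = complex_of_real (lim_s s)" if "s \<in> shapes n" for s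
  proof (cases "card (Ew s) + 1 = card (set s)")
    case True
    then have "PhiF \<phi> s = 1"
      using PhiF_tree[of s \<phi>] shape_props[OF that assms(1,2)] assms(3) by simp
    then show ?thesis by simp
  next
    case False then show ?thesis by (simp add: lim_s_def)
  qed
  have "(\<lambda>d. \<Sum>s\<in>shapes n. complex_of_real (real (Ncount d n s) * (1 / real d) ^ card (Ew s) / real d) * PhiF \<phi> s)
      \<longlonglongrightarrow> (\<Sum>s\<in>shapes n. complex_of_real (lim_s s) * PhiF \<phi> s)"
    by (intro tendsto_sum tendsto_mult tendsto_const tendsto_of_real term_lim assms)
  also have "(\<Sum>s\<in>shapes n. complex_of_real (lim_s s) * PhiF \<phi> s) = (\<Sum>s\<in>shapes n. complex_of_real (lim_s s))"
    by (rule sum.cong[OF refl]) (rule lim_phi)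
  also have "\<dots> = complex_of_real (\<Sum>s\<in>shapes n. lim_s s)" by simp
  finally show "(\<lambda>d. (\<Sum>x\<in>Xs d n. complex_of_real ((1 / real d) ^ card (Ew x)) * PhiF \<phi> x) / of_nat d)
            \<longlonglongrightarrow> complex_of_real (\<Sum>s\<in>shapes n. lim_s s)"
    unfolding P .
qed


lemma Xs_nth: "x \<in> Xs d n \<Longrightarrow> i < length x \<Longrightarrow> x ! i < d"
proof -
  assume x: "x \<in> Xs d n" and i: "i < length x"
  have "x ! i \<in> set x" using i by (rule nth_mem)
  then have "x ! i \<in> {..<d}" using x unfolding Xs_def by blast
  then show "x ! i < d" by simp
qed

lemma Xs_Suc_snoc: "Xs d (Suc m) = (\<lambda>(ys, t). ys @ [t]) ` (Xs d m \<times> {..<d})"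
proof
  show "Xs d (Suc m) \<subseteq> (\<lambda>(ys, t). ys @ [t]) ` (Xs d m \<times> {..<d})"
  proof
    fix zs assume z: "zs \<in> Xs d (Suc m)"
    then have "zs \<noteq> []" by (auto simp: Xs_def)
    then have "zs = butlast zs @ [last zs]" by simp
    moreover have "butlast zs \<in> Xs d m"
      using z by (auto simp: Xs_def dest: in_set_butlastD)
    moreover have "last zs \<in> set zs" using \<open>zs \<noteq> []\<close> by (rule last_in_set)
    then have "last zs < d" using z by (auto simp: Xs_def)
    ultimately show "zs \<in> (\<lambda>(ys, t). ys @ [t]) ` (Xs d m \<times> {..<d})"
      by (metis (no_types, lifting) SigmaI case_prod_conv image_eqI lessThan_iff)
  qed
qed (auto simp: Xs_def)

lemma inj_snoc: "inj_on (\<lambda>(ys, t). ys @ [t]) A"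
  by (auto simp: inj_on_def)

lemma Xs_Suc_cons: "Xs d (Suc m) = (\<lambda>(t, ys). t # ys) ` ({..<d} \<times> Xs d m)"
  by (auto simp: Xs_def image_iff length_Suc_conv)

lemma inj_cons: "inj_on (\<lambda>(t, ys). t # ys) A"
  by (auto simp: inj_on_def)

fun mprod :: "nat \<Rightarrow> (nat \<Rightarrow> 'a::comm_ring_1 mat) \<Rightarrow> nat \<Rightarrow> 'a mat" where
  "mprod d Q 0 = 1\<^sub>m d"
| "mprod d Q (Suc m) = mprod d Q m * Q m"

lemma mprod_carrier: "(\<And>j. Q j \<in> carrier_mat d d) \<Longrightarrow> mprod d Q m \<in> carrier_mat d d"
  by (induction m) auto

declare mprod.simps[simp del]

lemma mult_entry:
  assumes "M \<in> carrier_mat d d" "C \<in> carrier_mat d d" "i < d" "l < d"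
  shows "(M * C) $$ (i, l) = (\<Sum>t<d. M $$ (i, t) * C $$ (t, l))"
  using assms by (simp add: scalar_prod_def atLeast0LessThan)

lemma pow_mprod:
  fixes A C :: "'a::comm_ring_1 mat"
  assumes A: "A \<in> carrier_mat d d" and C: "C \<in> carrier_mat d d"
  shows "(A * C) ^\<^sub>m k = mprod d (\<lambda>j. if even j then A else C) (2 * k)"
proof (induction k)
  case 0 then show ?case using A C by (simp add: mprod.simps)
next
  case (Suc k)
  have M: "mprod d (\<lambda>j. if even j then A else C) (2 * k) \<in> carrier_mat d d"
    by (rule mprod_carrier) (use A C in auto)
  have "(A * C) ^\<^sub>m Suc k = mprod d (\<lambda>j. if even j then A else C) (2 * k) * (A * C)"
    using Suc by simp
  also have "\<dots> = mprod d (\<lambda>j. if even j then A else C) (2 * k) * A * C"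
    using M A C by (simp add: assoc_mult_mat)
  also have "\<dots> = mprod d (\<lambda>j. if even j then A else C) (2 * Suc k)"
    by (simp add: mprod.simps)
  finally show ?case .
qed

lemma snoc_prod:
  fixes Q :: "nat \<Rightarrow> 'a::comm_ring_1 mat"
  assumes len: "length ys = m"
  shows "(\<Prod>j<Suc m. Q j $$ ((i # ys) ! j, (i # ys @ [t]) ! Suc j)) * Q (Suc m) $$ (t, l) =
      (\<Prod>j<Suc (Suc m). Q j $$ ((i # ys @ [t]) ! j, (i # (ys @ [t]) @ [l]) ! Suc j))"
proof -
    have e1: "(i # ys @ [t]) ! j = (i # ys) ! j" if "j < Suc m" for j
      using that len by (cases j) (simp_all add: nth_append)
    have e2: "(i # (ys @ [t]) @ [l]) ! Suc j = (i # ys @ [t]) ! Suc j" if "j < Suc m" for j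
      using that len by (simp add: nth_append)
    have e3: "(i # ys @ [t]) ! Suc m = t" "(i # (ys @ [t]) @ [l]) ! Suc (Suc m) = l"
      using len by (simp_all add: nth_append)
    have p1: "(\<Prod>j<Suc m. Q j $$ ((i # ys @ [t]) ! j, (i # (ys @ [t]) @ [l]) ! Suc j)) =
        (\<Prod>j<Suc m. Q j $$ ((i # ys) ! j, (i # ys @ [t]) ! Suc j))"
      by (rule prod.cong[OF refl]) (metis e1 e2 lessThan_iff)
    have p2: "Q (Suc m) $$ ((i # ys @ [t]) ! Suc m, (i # (ys @ [t]) @ [l]) ! Suc (Suc m)) = Q (Suc m) $$ (t, l)"
      by (simp only: e3)
    show "(\<Prod>j<Suc m. Q j $$ ((i # ys) ! j, (i # ys @ [t]) ! Suc j)) * Q (Suc m) $$ (t, l) =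
      (\<Prod>j<Suc (Suc m). Q j $$ ((i # ys @ [t]) ! j, (i # (ys @ [t]) @ [l]) ! Suc j))"
      by (simp only: prod.lessThan_Suc[of _ "Suc m"] p1 p2)
qed

lemma mprod_entry:
  assumes Q: "\<And>j. Q j \<in> carrier_mat d d" and i: "i < d" and l: "l < d"
  shows "mprod d Q (Suc m) $$ (i, l) =
    (\<Sum>ys\<in>Xs d m. \<Prod>j<Suc m. Q j $$ ((i # ys) ! j, (i # ys @ [l]) ! Suc j))"
  using l
proof (induction m arbitrary: l)
  case 0
  have "Xs d 0 = {[]}" by (auto simp: Xs_def)
  then show ?case using Q[of 0] i 0 by (simp add: mprod.simps)
next
  case (Suc m)
  have M: "mprod d Q (Suc m) \<in> carrier_mat d d" by (rule mprod_carrier[OF Q])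
  have "mprod d Q (Suc (Suc m)) $$ (i, l) = (\<Sum>t<d. mprod d Q (Suc m) $$ (i, t) * Q (Suc m) $$ (t, l))"
    using M Q[of "Suc m"] i Suc.prems
    by (simp only: mprod.simps(2)[of d Q "Suc m"] mult_entry)
  also have "\<dots> = (\<Sum>t<d. \<Sum>ys\<in>Xs d m. (\<Prod>j<Suc m. Q j $$ ((i # ys) ! j, (i # ys @ [t]) ! Suc j)) * Q (Suc m) $$ (t, l))"
    by (intro sum.cong refl) (simp add: Suc.IH sum_distrib_right)
  also have "\<dots> = (\<Sum>(ys, t)\<in>Xs d m \<times> {..<d}. (\<Prod>j<Suc m. Q j $$ ((i # ys) ! j, (i # ys @ [t]) ! Suc j)) * Q (Suc m) $$ (t, l))"
    by (subst sum.swap) (simp add: sum.cartesian_product)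
  also have "\<dots> = (\<Sum>(ys, t)\<in>Xs d m \<times> {..<d}. \<Prod>j<Suc (Suc m). Q j $$ ((i # ys @ [t]) ! j, (i # (ys @ [t]) @ [l]) ! Suc j))"
    by (rule sum.cong[OF refl], clarify, rule snoc_prod) (simp add: Xs_def)
  also have "\<dots> = (\<Sum>zs\<in>Xs d (Suc m). \<Prod>j<Suc (Suc m). Q j $$ ((i # zs) ! j, (i # zs @ [l]) ! Suc j))"
    unfolding Xs_Suc_snoc by (subst sum.reindex[OF inj_snoc]) (simp add: case_prod_unfold)
  finally show ?case .
qed

lemma mprod_trace:
  assumes Q: "\<And>j. Q j \<in> carrier_mat d d"
  shows "mat_trace (mprod d Q (Suc m)) =
    (\<Sum>x\<in>Xs d (Suc m). \<Prod>j<Suc m. Q j $$ (x ! j, x ! (Suc j mod Suc m)))"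
proof -
  have M: "mprod d Q (Suc m) \<in> carrier_mat d d" by (rule mprod_carrier[OF Q])
  have "mat_trace (mprod d Q (Suc m)) = (\<Sum>i<d. \<Sum>ys\<in>Xs d m. \<Prod>j<Suc m. Q j $$ ((i # ys) ! j, (i # ys @ [i]) ! Suc j))"
    unfolding mat_trace_def using M by (intro sum.cong) (auto simp: mprod_entry[OF Q])
  also have "\<dots> = (\<Sum>(i, ys)\<in>{..<d} \<times> Xs d m. \<Prod>j<Suc m. Q j $$ ((i # ys) ! j, (i # ys @ [i]) ! Suc j))"
    by (simp add: sum.cartesian_product)
  also have "\<dots> = (\<Sum>(i, ys)\<in>{..<d} \<times> Xs d m. \<Prod>j<Suc m. Q j $$ ((i # ys) ! j, (i # ys) ! (Suc j mod Suc m)))"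
  proof (rule sum.cong[OF refl], clarify, rule prod.cong[OF refl])
    fix i ys j assume ys: "ys \<in> Xs d m" and j: "j \<in> {..<Suc m}"
    have len: "length ys = m" using ys by (simp add: Xs_def)
    show "Q j $$ ((i # ys) ! j, (i # ys @ [i]) ! Suc j) = Q j $$ ((i # ys) ! j, (i # ys) ! (Suc j mod Suc m))"
    proof (cases "Suc j = Suc m")
      case True then show ?thesis using len by (simp add: nth_append)
    next
      case False
      then have "Suc j < Suc m" using j by simp
      then show ?thesis using len by (simp add: nth_append)
    qed
  qed
  also have "\<dots> = (\<Sum>x\<in>Xs d (Suc m). \<Prod>j<Suc m. Q j $$ (x ! j, x ! (Suc j mod Suc m)))"
    unfolding Xs_Suc_cons by (subst sum.reindex[OF inj_cons]) (simp add: case_prod_unfold)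
  finally show ?thesis .
qed


lemma adjoint_carrier: "A \<in> carrier_mat d d \<Longrightarrow> mat_adjoint A \<in> carrier_mat d d"
  by (auto simp: mat_adjoint_def)

lemma adjoint_entry: "A \<in> carrier_mat d d \<Longrightarrow> i < d \<Longrightarrow> j < d \<Longrightarrow> mat_adjoint A $$ (i, j) = conjugate (A $$ (j, i))"
  by (simp add: mat_adjoint_def mat_of_rows_index)

lemma Btheta_carrier: "B_theta d b \<theta> \<in> carrier_mat d d"
  by (simp add: B_theta_def)

lemma Bmat_carrier: "B_mat d b \<in> carrier_mat d d"
  by (simp add: B_mat_def)

definition wth :: "(nat \<times> nat \<Rightarrow> bool) \<Rightarrow> (nat \<times> nat \<Rightarrow> real) \<Rightarrow> nat list \<Rightarrow> nat \<Rightarrow> complex" where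
  "wth b \<theta> x j = (if b (ent x j) then 1 else 0) * exp (\<i> * of_int (sg j) * complex_of_real (\<theta> (ent x j)))"

lemma trace_theta:
  assumes "k \<ge> 1"
  shows "mat_trace ((mat_adjoint (B_theta d b \<theta>) * B_theta d b \<theta>) ^\<^sub>m k) =
    (\<Sum>x\<in>Xs d (2 * k). \<Prod>j<2 * k. wth b \<theta> x j)"
proof -
  define A where "A = B_theta d b \<theta>"
  define Q where "Q = (\<lambda>j::nat. if even j then mat_adjoint A else A)"
  obtain m where m: "2 * k = Suc m" using assms by (intro that[of "2 * k - 1"]) simp
  have A: "A \<in> carrier_mat d d" by (simp add: A_def Btheta_carrier)
  have Q: "Q j \<in> carrier_mat d d" for j using A adjoint_carrier[OF A] by (simp add: Q_def)
  have "mat_trace ((mat_adjoint A * A) ^\<^sub>m k) = mat_trace (mprod d Q (Suc m))"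
    using pow_mprod[OF adjoint_carrier[OF A] A, of k] m by (simp add: Q_def)
  also have "\<dots> = (\<Sum>x\<in>Xs d (Suc m). \<Prod>j<Suc m. Q j $$ (x ! j, x ! (Suc j mod Suc m)))"
    by (rule mprod_trace[OF Q])
  also have "\<dots> = (\<Sum>x\<in>Xs d (Suc m). \<Prod>j<Suc m. wth b \<theta> x j)"
  proof (intro sum.cong refl prod.cong)
    fix x j assume x: "x \<in> Xs d (Suc m)" and j: "j \<in> {..<Suc m}"
    have len: "length x = Suc m" using x by (simp add: Xs_def)
    have lt1: "x ! j < d" using x j len by (intro Xs_nth[OF x]) simp
    have "Suc j mod Suc m < length x" using len by simp
    then have lt2: "x ! (Suc j mod Suc m) < d" by (rule Xs_nth[OF x])
    show "Q j $$ (x ! j, x ! (Suc j mod Suc m)) = wth b \<theta> x j"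
    proof (cases "even j")
      case True
      have "Q j $$ (x ! j, x ! (Suc j mod Suc m)) = conjugate (A $$ (x ! (Suc j mod Suc m), x ! j))"
        using True adjoint_entry[OF A lt1 lt2] by (simp add: Q_def)
      also have "\<dots> = wth b \<theta> x j"
        using True lt1 lt2 len by (simp add: A_def B_theta_def wth_def ent_def sg_def exp_cnj)
      finally show ?thesis .
    next
      case False
      then show ?thesis using lt1 lt2 len
        by (simp add: Q_def A_def B_theta_def wth_def ent_def sg_def)
    qed
  qed
  finally show ?thesis unfolding A_def m .
qed

lemma trace_real:
  assumes "k \<ge> 1"
  shows "mat_trace ((transpose_mat (B_mat d b) * B_mat d b) ^\<^sub>m k) =
    (\<Sum>x\<in>Xs d (2 * k). \<Prod>j<2 * k. (if b (ent x j) then 1 else 0 :: real))"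
proof -
  define A where "A = B_mat d b"
  define Q where "Q = (\<lambda>j::nat. if even j then transpose_mat A else A)"
  obtain m where m: "2 * k = Suc m" using assms by (intro that[of "2 * k - 1"]) simp
  have A: "A \<in> carrier_mat d d" by (simp add: A_def Bmat_carrier)
  have Q: "Q j \<in> carrier_mat d d" for j using A by (simp add: Q_def)
  have "mat_trace ((transpose_mat A * A) ^\<^sub>m k) = mat_trace (mprod d Q (Suc m))"
    using pow_mprod[OF _ A, of "transpose_mat A" k] A m by (simp add: Q_def)
  also have "\<dots> = (\<Sum>x\<in>Xs d (Suc m). \<Prod>j<Suc m. Q j $$ (x ! j, x ! (Suc j mod Suc m)))"
    by (rule mprod_trace[OF Q])
  also have "\<dots> = (\<Sum>x\<in>Xs d (Suc m). \<Prod>j<Suc m. (if b (ent x j) then 1 else 0 :: real))"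
  proof (intro sum.cong refl prod.cong)
    fix x j assume x: "x \<in> Xs d (Suc m)" and j: "j \<in> {..<Suc m}"
    have len: "length x = Suc m" using x by (simp add: Xs_def)
    have lt1: "x ! j < d" using x j len by (intro Xs_nth[OF x]) simp
    have "Suc j mod Suc m < length x" using len by simp
    then have lt2: "x ! (Suc j mod Suc m) < d" by (rule Xs_nth[OF x])
    show "Q j $$ (x ! j, x ! (Suc j mod Suc m)) = (if b (ent x j) then 1 else 0)"
      using lt1 lt2 len by (simp add: Q_def A_def B_mat_def ent_def)
  qed
  finally show ?thesis unfolding A_def m .
qed


lemma pair_int_mult:
  fixes f :: "'a \<Rightarrow> complex" and g :: "'b \<Rightarrow> complex"
  assumes P1: "prob_space M1" and P2: "prob_space M2"
    and f: "f \<in> borel_measurable M1" and g: "g \<in> borel_measurable M2"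
    and bf: "\<And>x. norm (f x) \<le> 1" and bg: "\<And>y. norm (g y) \<le> 1"
  shows "integrable (M1 \<Otimes>\<^sub>M M2) (\<lambda>z. f (fst z) * g (snd z))"
    and "(\<integral>z. f (fst z) * g (snd z) \<partial>(M1 \<Otimes>\<^sub>M M2)) = integral\<^sup>L M1 f * integral\<^sup>L M2 g"
proof -
  interpret pair_sigma_finite M1 M2
    unfolding pair_sigma_finite_def using prob_space_imp_sigma_finite[OF P1] prob_space_imp_sigma_finite[OF P2] by auto
  have fm: "finite_measure (M1 \<Otimes>\<^sub>M M2)"
    using prob_space_pair[OF P1 P2] by (rule prob_space.finite_measure)
  have m: "(\<lambda>z. f (fst z) * g (snd z)) \<in> borel_measurable (M1 \<Otimes>\<^sub>M M2)"
    by (intro borel_measurable_times measurable_compose[OF measurable_fst f] measurable_compose[OF measurable_snd g])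
  have b: "norm (f (fst z) * g (snd z)) \<le> 1" for z
    using bf[of "fst z"] bg[of "snd z"] by (simp add: norm_mult mult_le_one)
  show int: "integrable (M1 \<Otimes>\<^sub>M M2) (\<lambda>z. f (fst z) * g (snd z))"
    by (rule finite_measure.integrable_const_bound[OF fm, where B=1]) (use b m in auto)
  have "(\<integral>z. f (fst z) * g (snd z) \<partial>(M1 \<Otimes>\<^sub>M M2)) = (\<integral>x. \<integral>y. f x * g y \<partial>M2 \<partial>M1)"
    using integral_fst'[OF int] by simp
  also have "\<dots> = integral\<^sup>L M1 f * integral\<^sup>L M2 g" by simp
  finally show "(\<integral>z. f (fst z) * g (snd z) \<partial>(M1 \<Otimes>\<^sub>M M2)) = integral\<^sup>L M1 f * integral\<^sup>L M2 g" .
qed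

lemma prod_01:
  assumes "finite J"
  shows "(\<Prod>j\<in>J. (if P j then 1 else 0 :: 'a::comm_semiring_1)) = (if \<forall>j\<in>J. P j then 1 else 0)"
  using assms by (induction J rule: finite_induct) auto

lemma ent_entries: "x \<in> Xs d n \<Longrightarrow> j < length x \<Longrightarrow> ent x j \<in> {0..<d} \<times> {0..<d}"
  using Xs_nth[of x d n] Suc_mod_lt[of j x] by (auto simp: ent_def)

lemma Ew_entries: assumes x: "x \<in> Xs d n" shows "Ew x \<subseteq> {0..<d} \<times> {0..<d}"
proof
  fix e assume "e \<in> Ew x"
  then obtain j where "j < length x" "e = ent x j" by (auto simp: Ew_def)
  then show "e \<in> {0..<d} \<times> {0..<d}" using ent_entries[OF x] by simp
qed

lemma prob_bern: "prob_space (bern_ens d)"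
  unfolding bern_ens_def by (intro prob_space_PiM prob_space_measure_pmf)

lemma prob_phase: "prob_space \<mu> \<Longrightarrow> prob_space (phase_ens \<mu> d)"
  unfolding phase_ens_def by (intro prob_space_PiM)

lemma meas_bern_ind:
  assumes "x \<in> Xs d n"
  shows "(\<lambda>b. \<Prod>j<length x. (if b (ent x j) then 1 else 0 :: real)) \<in> borel_measurable (bern_ens d)"
proof (rule borel_measurable_prod)
  fix j assume j: "j \<in> {..<length x}"
  have e: "ent x j \<in> {0..<d} \<times> {0..<d}" using ent_entries[OF assms] j by simp
  have "(\<lambda>v::bool. if v then 1 else 0 :: real) \<in> borel_measurable (measure_pmf (bernoulli_pmf (1 / real d)))"
    by simp
  then show "(\<lambda>b. if b (ent x j) then 1 else 0 :: real) \<in> borel_measurable (bern_ens d)"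
    unfolding bern_ens_def by (rule measurable_compose[OF measurable_component_singleton[OF e]])
qed

lemma bern_integral:
  assumes x: "x \<in> Xs d n"
  shows "(\<integral>b. (\<Prod>j<length x. (if b (ent x j) then 1 else 0 :: real)) \<partial>bern_ens d) = (1 / real d) ^ card (Ew x)"
proof -
  define I where "I = {0..<d} \<times> {0..<d}"
  define h where "h e v = (if e \<in> Ew x \<longrightarrow> v then 1 else 0 :: real)" for e v
  have sub: "Ew x \<subseteq> I" using Ew_entries[OF x] by (simp add: I_def)
  have fI: "finite I" by (simp add: I_def)
  have eq: "(\<Prod>j<length x. (if b (ent x j) then 1 else 0 :: real)) = (\<Prod>e\<in>I. h e (b e))" for b
  proof -
    have "(\<forall>j\<in>{..<length x}. b (ent x j)) = (\<forall>e\<in>I. e \<in> Ew x \<longrightarrow> b e)"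
      using sub by (auto simp: Ew_def)
    then show ?thesis unfolding h_def by (simp add: prod_01[OF fI] prod_01[OF finite_lessThan])
  qed
  interpret product_prob_space "\<lambda>_. measure_pmf (bernoulli_pmf (1 / real d))" I
    by (rule product_prob_spaceI) (rule prob_space_measure_pmf)
  have p01: "0 \<le> 1 / real d" "1 / real d \<le> (1::real)" by (auto simp: divide_le_eq)
  have "(\<integral>b. (\<Prod>j<length x. (if b (ent x j) then 1 else 0 :: real)) \<partial>bern_ens d) =
      (\<integral>b. (\<Prod>e\<in>I. h e (b e)) \<partial>Pi\<^sub>M I (\<lambda>_. measure_pmf (bernoulli_pmf (1 / real d))))"
    unfolding eq bern_ens_def I_def by simp
  also have "\<dots> = (\<Prod>e\<in>I. integral\<^sup>L (measure_pmf (bernoulli_pmf (1 / real d))) (h e))"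
    by (rule product_integral_prod) (auto simp: I_def intro: integrable_measure_pmf_finite)
  also have "\<dots> = (\<Prod>e\<in>I. if e \<in> Ew x then 1 / real d else 1)"
    using p01 by (intro prod.cong refl) (simp add: h_def)
  also have "\<dots> = (1 / real d) ^ card (Ew x)"
    using sub by (simp add: prod.If_cases I_def Int_absorb1 Int_absorb2)
  finally show ?thesis .
qed

definition phi_mu :: "real measure \<Rightarrow> int \<Rightarrow> complex" where
  "phi_mu \<mu> c = (\<integral>t. exp (\<i> * of_int c * complex_of_real t) \<partial>\<mu>)"

lemma phi_mu_0: "prob_space \<mu> \<Longrightarrow> phi_mu \<mu> 0 = 1"
  by (simp add: phi_mu_def prob_space.prob_space)

lemma norm_exp_i: "norm (exp (\<i> * of_int c * complex_of_real t)) = 1"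
proof -
  have "\<i> * of_int c * complex_of_real t = \<i> * complex_of_real (of_int c * t)" by simp
  then show ?thesis by (simp only: norm_exp_i_times)
qed

lemma meas_exp:
  assumes "sets \<mu> = sets borel"
  shows "(\<lambda>t. exp (\<i> * of_int c * complex_of_real t)) \<in> borel_measurable \<mu>"
proof -
  have "(\<lambda>t. exp (\<i> * of_int c * complex_of_real t)) \<in> borel_measurable borel"
    by (intro borel_measurable_continuous_onI continuous_intros)
  moreover have eq: "borel_measurable \<mu> = (borel_measurable borel :: (real \<Rightarrow> complex) set)"
    by (rule measurable_cong_sets[OF assms refl])
  ultimately show ?thesis by simp
qed

lemma theta_rewrite:
  assumes x: "x \<in> Xs d n"
  shows "(\<Prod>j<length x. exp (\<i> * of_int (sg j) * complex_of_real (\<theta> (ent x j)))) =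
    (\<Prod>e\<in>{0..<d} \<times> {0..<d}. exp (\<i> * of_int (flow x e) * complex_of_real (\<theta> e)))"
proof -
  define I where "I = {0..<d} \<times> {0..<d}"
  have fI: "finite I" by (simp add: I_def)
  have sub: "ent x ` {..<length x} \<subseteq> I" unfolding I_def image_subset_iff using ent_entries[OF x] by simp
  have "(\<Sum>j<length x. \<i> * of_int (sg j) * complex_of_real (\<theta> (ent x j))) =
     (\<Sum>e\<in>I. \<Sum>j\<in>{j \<in> {..<length x}. ent x j = e}. \<i> * of_int (sg j) * complex_of_real (\<theta> (ent x j)))"
    by (rule sum.group[symmetric]) (use fI sub in auto)
  also have "\<dots> = (\<Sum>e\<in>I. \<i> * of_int (flow x e) * complex_of_real (\<theta> e))"
  proof (rule sum.cong[OF refl])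
    fix e assume "e \<in> I"
    have "(\<Sum>j\<in>{j \<in> {..<length x}. ent x j = e}. \<i> * of_int (sg j) * complex_of_real (\<theta> (ent x j))) =
        (\<Sum>j\<in>{j \<in> {..<length x}. ent x j = e}. \<i> * complex_of_real (\<theta> e) * of_int (sg j))"
      by (intro sum.cong refl) auto
    also have "\<dots> = \<i> * complex_of_real (\<theta> e) * of_int (\<Sum>j\<in>{j \<in> {..<length x}. ent x j = e}. sg j)"
      by (simp add: sum_distrib_left)
    also have "{j \<in> {..<length x}. ent x j = e} = {j. j < length x \<and> ent x j = e}" by auto
    finally show "(\<Sum>j\<in>{j \<in> {..<length x}. ent x j = e}. \<i> * of_int (sg j) * complex_of_real (\<theta> (ent x j))) =
        \<i> * of_int (flow x e) * complex_of_real (\<theta> e)"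
      by (simp add: flow_def mult_ac)
  qed
  finally have s: "(\<Sum>j<length x. \<i> * of_int (sg j) * complex_of_real (\<theta> (ent x j))) =
      (\<Sum>e\<in>I. \<i> * of_int (flow x e) * complex_of_real (\<theta> e))" .
  show ?thesis
    unfolding I_def[symmetric] exp_sum[OF fI, symmetric] exp_sum[OF finite_lessThan, symmetric] s ..
qed

lemma theta_integral:
  assumes Pmu: "prob_space \<mu>" and S: "sets \<mu> = sets borel" and x: "x \<in> Xs d n"
  shows "(\<integral>\<theta>. (\<Prod>j<length x. exp (\<i> * of_int (sg j) * complex_of_real (\<theta> (ent x j)))) \<partial>phase_ens \<mu> d) =
    PhiF (phi_mu \<mu>) x"
proof -
  define I where "I = {0..<d} \<times> {0..<d}"
  interpret product_prob_space "\<lambda>_. \<mu>" I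
    by (rule product_prob_spaceI) (rule Pmu)
  have "(\<integral>\<theta>. (\<Prod>j<length x. exp (\<i> * of_int (sg j) * complex_of_real (\<theta> (ent x j)))) \<partial>phase_ens \<mu> d) =
     (\<integral>\<theta>. (\<Prod>e\<in>I. exp (\<i> * of_int (flow x e) * complex_of_real (\<theta> e))) \<partial>Pi\<^sub>M I (\<lambda>_. \<mu>))"
    unfolding theta_rewrite[OF x] phase_ens_def I_def ..
  also have "\<dots> = (\<Prod>e\<in>I. phi_mu \<mu> (flow x e))"
    unfolding phi_mu_def
  proof (rule product_integral_prod)
    show "finite I" by (simp add: I_def)
    fix e assume "e \<in> I"
    show "integrable \<mu> (\<lambda>t. exp (\<i> * of_int (flow x e) * complex_of_real t))"
      by (rule finite_measure.integrable_const_bound[OF prob_space.finite_measure[OF Pmu], where B=1]) (auto simp: norm_exp_i meas_exp[OF S])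
  qed
  also have "\<dots> = (\<Prod>e\<in>Ew x. phi_mu \<mu> (flow x e))"
  proof (rule prod.mono_neutral_right)
    show "finite I" by (simp add: I_def)
    show "Ew x \<subseteq> I" using Ew_entries[OF x] by (simp add: I_def)
    show "\<forall>e\<in>I - Ew x. phi_mu \<mu> (flow x e) = 1"
    proof
      fix e assume "e \<in> I - Ew x"
      then have em: "{j. j < length x \<and> ent x j = e} = {}" by (auto simp: Ew_def)
      have "flow x e = 0" unfolding flow_def em by simp
      then show "phi_mu \<mu> (flow x e) = 1" using phi_mu_0[OF Pmu] by simp
    qed
  qed
  finally show ?thesis by (simp add: PhiF_def)
qed


lemma Xs_len: "x \<in> Xs d n \<Longrightarrow> length x = n"
  by (simp add: Xs_def)

lemma meas_Gf:
  assumes S: "sets \<mu> = sets borel" and x: "x \<in> Xs d n"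
  shows "(\<lambda>\<theta>. \<Prod>j<length x. exp (\<i> * of_int (sg j) * complex_of_real (\<theta> (ent x j)))) \<in> borel_measurable (phase_ens \<mu> d)"
proof (rule borel_measurable_prod)
  fix j assume j: "j \<in> {..<length x}"
  have e: "ent x j \<in> {0..<d} \<times> {0..<d}" using ent_entries[OF x] j by simp
  show "(\<lambda>\<theta>. exp (\<i> * of_int (sg j) * complex_of_real (\<theta> (ent x j)))) \<in> borel_measurable (phase_ens \<mu> d)"
    unfolding phase_ens_def by (rule measurable_compose[OF measurable_component_singleton[OF e] meas_exp[OF S]])
qed

lemma norm_Gf: "norm (\<Prod>j<m. exp (\<i> * of_int (sg j) * complex_of_real (\<theta> (ent x j)))) = 1"
  by (simp add: prod_norm[symmetric] norm_exp_i)

lemma F_bound: "norm (\<Prod>j<m. (if b (ent x j) then 1 else 0 :: real)) \<le> 1"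
  by (simp add: prod_01)

lemma expected_theta:
  assumes k: "k \<ge> 1" and Pmu: "prob_space \<mu>" and S: "sets \<mu> = sets borel"
  shows "(\<integral>bt. mat_trace ((mat_adjoint (B_theta d (fst bt) (snd bt)) * B_theta d (fst bt) (snd bt)) ^\<^sub>m k)
              \<partial>(bern_ens d \<Otimes>\<^sub>M phase_ens \<mu> d)) =
    (\<Sum>x\<in>Xs d (2 * k). complex_of_real ((1 / real d) ^ card (Ew x)) * PhiF (phi_mu \<mu>) x)"
proof -
  define F where "F x b = (\<Prod>j<2 * k. (if b (ent x j) then 1 else 0 :: real))" for x and b :: "nat \<times> nat \<Rightarrow> bool"
  define Gf where "Gf x \<theta> = (\<Prod>j<2 * k. exp (\<i> * of_int (sg j) * complex_of_real (\<theta> (ent x j))))" for x and \<theta> :: "nat \<times> nat \<Rightarrow> real"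
  have ws: "(\<Prod>j<2 * k. wth b \<theta> x j) = complex_of_real (F x b) * Gf x \<theta>" for b \<theta> x
  proof -
    have "(\<Prod>j<2 * k. (if b (ent x j) then 1 else 0 :: complex)) = complex_of_real (F x b)"
      unfolding F_def of_real_prod by (intro prod.cong refl) simp
    then show ?thesis unfolding wth_def Gf_def prod.distrib by simp
  qed
  have integrand: "mat_trace ((mat_adjoint (B_theta d (fst bt) (snd bt)) * B_theta d (fst bt) (snd bt)) ^\<^sub>m k) =
      (\<Sum>x\<in>Xs d (2 * k). complex_of_real (F x (fst bt)) * Gf x (snd bt))" for bt
    unfolding trace_theta[OF k] ws ..
  have PI: "integrable (bern_ens d \<Otimes>\<^sub>M phase_ens \<mu> d) (\<lambda>z. complex_of_real (F x (fst z)) * Gf x (snd z)) \<and>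
      (\<integral>z. complex_of_real (F x (fst z)) * Gf x (snd z) \<partial>(bern_ens d \<Otimes>\<^sub>M phase_ens \<mu> d)) =
      complex_of_real ((1 / real d) ^ card (Ew x)) * PhiF (phi_mu \<mu>) x" if x: "x \<in> Xs d (2 * k)" for x
  proof -
    have len: "length x = 2 * k" using x by (rule Xs_len)
    have mF: "(\<lambda>b. complex_of_real (F x b)) \<in> borel_measurable (bern_ens d)"
      using meas_bern_ind[OF x] unfolding F_def len by measurable
    have mG: "Gf x \<in> borel_measurable (phase_ens \<mu> d)"
      using meas_Gf[OF S x] unfolding Gf_def len .
    have bF: "norm (complex_of_real (F x b)) \<le> 1" for b
      using F_bound[where m="2 * k" and b=b and x=x] by (simp only: F_def norm_of_real real_norm_def)
    have bG: "norm (Gf x t) \<le> 1" for t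
      using norm_Gf[where m="2 * k" and \<theta>=t and x=x] by (simp add: Gf_def)
    note pm = pair_int_mult[OF prob_bern prob_phase[OF Pmu] mF mG bF bG]
    have "(\<integral>b. F x b \<partial>bern_ens d) = (1 / real d) ^ card (Ew x)"
      unfolding F_def using bern_integral[OF x] unfolding len .
    then have "(\<integral>b. complex_of_real (F x b) \<partial>bern_ens d) = complex_of_real ((1 / real d) ^ card (Ew x))"
      by (simp only: integral_complex_of_real)
    moreover have "(\<integral>t. Gf x t \<partial>phase_ens \<mu> d) = PhiF (phi_mu \<mu>) x"
      using theta_integral[OF Pmu S x] by (simp add: Gf_def len)
    ultimately show ?thesis using pm by simp
  qed
  have "(\<integral>bt. mat_trace ((mat_adjoint (B_theta d (fst bt) (snd bt)) * B_theta d (fst bt) (snd bt)) ^\<^sub>m k)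
              \<partial>(bern_ens d \<Otimes>\<^sub>M phase_ens \<mu> d)) =
     (\<integral>bt. (\<Sum>x\<in>Xs d (2 * k). complex_of_real (F x (fst bt)) * Gf x (snd bt)) \<partial>(bern_ens d \<Otimes>\<^sub>M phase_ens \<mu> d))"
    unfolding integrand ..
  also have "\<dots> = (\<Sum>x\<in>Xs d (2 * k). \<integral>bt. complex_of_real (F x (fst bt)) * Gf x (snd bt) \<partial>(bern_ens d \<Otimes>\<^sub>M phase_ens \<mu> d))"
    by (rule Bochner_Integration.integral_sum) (use PI in blast)
  also have "\<dots> = (\<Sum>x\<in>Xs d (2 * k). complex_of_real ((1 / real d) ^ card (Ew x)) * PhiF (phi_mu \<mu>) x)"
    by (rule sum.cong[OF refl]) (use PI in blast)
  finally show ?thesis .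
qed

lemma expected_real:
  assumes k: "k \<ge> 1"
  shows "(\<integral>b. mat_trace ((transpose_mat (B_mat d b) * B_mat d b) ^\<^sub>m k) \<partial>bern_ens d) =
    (\<Sum>x\<in>Xs d (2 * k). (1 / real d) ^ card (Ew x))"
proof -
  have I: "integrable (bern_ens d) (\<lambda>b. \<Prod>j<2 * k. (if b (ent x j) then 1 else 0 :: real))" if x: "x \<in> Xs d (2 * k)" for x
  proof -
    have len: "length x = 2 * k" using x by (rule Xs_len)
    show ?thesis
      by (rule finite_measure.integrable_const_bound[OF prob_space.finite_measure[OF prob_bern], where B=1])
         (use F_bound meas_bern_ind[OF x] len in auto)
  qed
  have "(\<integral>b. mat_trace ((transpose_mat (B_mat d b) * B_mat d b) ^\<^sub>m k) \<partial>bern_ens d) =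
     (\<integral>b. (\<Sum>x\<in>Xs d (2 * k). \<Prod>j<2 * k. (if b (ent x j) then 1 else 0 :: real)) \<partial>bern_ens d)"
    unfolding trace_real[OF k] ..
  also have "\<dots> = (\<Sum>x\<in>Xs d (2 * k). \<integral>b. (\<Prod>j<2 * k. (if b (ent x j) then 1 else 0 :: real)) \<partial>bern_ens d)"
    by (rule Bochner_Integration.integral_sum) (rule I)
  also have "\<dots> = (\<Sum>x\<in>Xs d (2 * k). (1 / real d) ^ card (Ew x))"
    by (rule sum.cong[OF refl]) (metis bern_integral Xs_len)
  finally show ?thesis .
qed

theorem proposition3:
  fixes \<mu> :: "real measure" and k :: nat
  assumes "prob_space \<mu>" and "sets \<mu> = sets borel" and "k \<ge> 1"
  shows "\<exists>L::real.
    ((\<lambda>d. (\<integral>bt. mat_trace ((mat_adjoint (B_theta d (fst bt) (snd bt)) * B_theta d (fst bt) (snd bt)) ^\<^sub>m k)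
              \<partial>(bern_ens d \<Otimes>\<^sub>M phase_ens \<mu> d)) / of_nat d) \<longlonglongrightarrow> complex_of_real L)
    \<and> ((\<lambda>d. (\<integral>b. mat_trace ((transpose_mat (B_mat d b) * B_mat d b) ^\<^sub>m k) \<partial>bern_ens d) / real d) \<longlonglongrightarrow> L)"
proof -
  have n: "2 * k > 0" "even (2 * k)" using assms(3) by auto
  note cl = comb_limit[where \<phi>="phi_mu \<mu>", OF n phi_mu_0[OF assms(1)]]
  show ?thesis
    unfolding expected_theta[OF assms(3,1,2)] expected_real[OF assms(3)]
    using cl by blast
qed

end
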